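(* Let $G$ be a $2$-free digraph on $n$ vertices. Then $\tilde{P}_3(G) \leq \frac{2}{25}n^3$.
   Context: All digraphs are finite, have no loops, and have at most one edge $uv$ (the ordered pair $(u,v)$) for each ordered pair of distinct vertices. A digraph is $2$-free if it has no directed cycle of length at most $2$, i.e. there are no distinct vertices $u,v$ with both $uv$ and $vu$ edges. An induced $3$-vertex directed path is a triple $(a,b,c)$ of distinct vertices such that $ab$ and $bc$ are edges and neither $ac$ nor $ca$ is an edge. $\tilde{P}_3(G)$ denotes the number of induced $3$-vertex directed paths in $G$. *)

theory Defs
  imports Complex_Main
begin

text \<open>A digraph on a finite vertex set V with edge relation E (E u v means the edge uv).
 Loopless, edges only between vertices of V; at most one edge per ordered pair is automatic.\<close>
definition digraph :: "'a set \<Rightarrow> ('a \<Rightarrow> 'a \<Rightarrow> bool) \<Rightarrow> bool" where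
  "digraph V E \<longleftrightarrow> finite V \<and> (\<forall>u v. E u v \<longrightarrow> u \<in> V \<and> v \<in> V \<and> u \<noteq> v)"

definition two_free :: "'a set \<Rightarrow> ('a \<Rightarrow> 'a \<Rightarrow> bool) \<Rightarrow> bool" where
  "two_free V E \<longleftrightarrow> (\<forall>u\<in>V. \<forall>v\<in>V. u \<noteq> v \<longrightarrow> \<not> (E u v \<and> E v u))"

definition induced_P3s :: "'a set \<Rightarrow> ('a \<Rightarrow> 'a \<Rightarrow> bool) \<Rightarrow> ('a \<times> 'a \<times> 'a) set" where
  "induced_P3s V E = {(a,b,c). a \<in> V \<and> b \<in> V \<and> c \<in> V \<and> a \<noteq> b \<and> b \<noteq> c \<and> a \<noteq> c
      \<and> E a b \<and> E b c \<and> \<not> E a c \<and> \<not> E c a}"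

definition P3_count :: "'a set \<Rightarrow> ('a \<Rightarrow> 'a \<Rightarrow> bool) \<Rightarrow> nat" where
  "P3_count V E = card (induced_P3s V E)"

end

theory Submission
  imports Defs
begin

definition al :: "('a \<Rightarrow> 'a \<Rightarrow> bool) \<Rightarrow> 'a \<Rightarrow> 'a \<Rightarrow> real" where
  "al E b a = (if E a b then 1 else if E b a then -1 else 0)"

definition be :: "('a \<Rightarrow> 'a \<Rightarrow> bool) \<Rightarrow> 'a \<Rightarrow> 'a \<Rightarrow> real" where
  "be E b a = (if a = b then 0 else if E a b \<or> E b a then 1 else -4)"

definition pp :: "('a \<Rightarrow> 'a \<Rightarrow> bool) \<Rightarrow> 'a \<Rightarrow> 'a \<Rightarrow> 'a \<Rightarrow> real" where
  "pp E a b c = (if a \<noteq> c \<and> E a b \<and> E b c \<and> \<not> E a c \<and> \<not> E c a then 1 else 0)"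

definition WW :: "('a \<Rightarrow> 'a \<Rightarrow> bool) \<Rightarrow> 'a \<Rightarrow> 'a \<Rightarrow> 'a \<Rightarrow> real" where
  "WW E a b c = 45 * al E b a * al E b c + be E b a * be E b c + 200 * pp E a b c"

lemma local_bound:
  assumes loop: "\<And>u. \<not> E u u"
    and ab: "\<not> (E a b \<and> E b a)" and bc: "\<not> (E b c \<and> E c b)" and ac: "\<not> (E a c \<and> E c a)"
  shows "WW E a b c + WW E a c b + WW E b a c + WW E b c a + WW E c a b + WW E c b a \<le> 96"
  using assms
  apply (cases "a = b"; cases "b = c"; cases "a = c")
  apply (simp_all add: WW_def al_def be_def pp_def)
  done

abbreviation S3 :: "'a set \<Rightarrow> ('a \<Rightarrow> 'a \<Rightarrow> 'a \<Rightarrow> real) \<Rightarrow> real" where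
  "S3 V f \<equiv> (\<Sum>a\<in>V. \<Sum>b\<in>V. \<Sum>c\<in>V. f a b c)"

lemma S3_swap12: "S3 V (\<lambda>a b c. f b a c) = S3 V f"
  by (rule sum.swap)

lemma S3_swap23: "S3 V (\<lambda>a b c. f a c b) = S3 V f"
  by (rule sum.cong[OF refl], rule sum.swap)

lemma S3_perms:
  "S3 V (\<lambda>a b c. f a c b) = S3 V f"
  "S3 V (\<lambda>a b c. f b a c) = S3 V f"
  "S3 V (\<lambda>a b c. f b c a) = S3 V f"
  "S3 V (\<lambda>a b c. f c a b) = S3 V f"
  "S3 V (\<lambda>a b c. f c b a) = S3 V f"
proof -
  show 1: "S3 V (\<lambda>a b c. f a c b) = S3 V f" by (rule S3_swap23)
  show 2: "S3 V (\<lambda>a b c. f b a c) = S3 V f" by (rule S3_swap12)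
  have "S3 V (\<lambda>a b c. f b c a) = S3 V (\<lambda>a b c. f a c b)"
    using S3_swap12[where V=V and f="\<lambda>a b c. f a c b"] by simp
  then show "S3 V (\<lambda>a b c. f b c a) = S3 V f" using 1 by simp
  have "S3 V (\<lambda>a b c. f c a b) = S3 V (\<lambda>a b c. f b a c)"
    using S3_swap23[where V=V and f="\<lambda>a b c. f b a c"] by simp
  then show "S3 V (\<lambda>a b c. f c a b) = S3 V f" using 2 by simp
  have "S3 V (\<lambda>a b c. f c b a) = S3 V (\<lambda>a b c. f b c a)"
    using S3_swap23[where V=V and f="\<lambda>a b c. f b c a"] by simp
  also have "\<dots> = S3 V (\<lambda>a b c. f a c b)"
    using S3_swap12[where V=V and f="\<lambda>a b c. f a c b"] by simp
  finally show "S3 V (\<lambda>a b c. f c b a) = S3 V f" using 1 by simp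
qed

theorem mainTheorem1:
  fixes V :: "'a set" and E :: "'a \<Rightarrow> 'a \<Rightarrow> bool"
  assumes "digraph V E" and "two_free V E"
  shows "real (P3_count V E) \<le> 2 / 25 * real (card V) ^ 3"
proof -
  have fin: "finite V" and eV: "\<And>u v. E u v \<Longrightarrow> u \<in> V \<and> v \<in> V \<and> u \<noteq> v"
    using assms(1) unfolding digraph_def by auto
  have loop: "\<And>u. \<not> E u u" using eV by blast
  have tf: "\<And>u v. \<not> (E u v \<and> E v u)" using assms(2) eV unfolding two_free_def by blast
  define n where "n = card V"
  have cnt: "real (P3_count V E) = S3 V (pp E)"
  proof -
    have sub: "induced_P3s V E \<subseteq> V \<times> V \<times> V" unfolding induced_P3s_def by auto
    have "real (P3_count V E) = (\<Sum>t\<in>induced_P3s V E. 1)"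
      unfolding P3_count_def by simp
    also have "\<dots> = (\<Sum>t\<in>V \<times> V \<times> V. if t \<in> induced_P3s V E then 1 else 0)"
      using sub fin by (simp add: sum.If_cases Int_absorb1)
    also have "\<dots> = S3 V (\<lambda>a b c. if (a,b,c) \<in> induced_P3s V E then 1 else 0)"
      by (simp add: sum.cartesian_product)
    also have "\<dots> = S3 V (pp E)"
      by (intro sum.cong refl) (auto simp: pp_def induced_P3s_def dest: eV)
    finally show ?thesis .
  qed
  have sq: "S3 V (\<lambda>a b c. 45 * al E b a * al E b c + be E b a * be E b c) \<ge> 0"
  proof -
    have "S3 V (\<lambda>a b c. 45 * al E b a * al E b c + be E b a * be E b c)
        = (\<Sum>b\<in>V. \<Sum>a\<in>V. \<Sum>c\<in>V. 45 * al E b a * al E b c + be E b a * be E b c)"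
      by (rule sum.swap)
    also have "\<dots> = (\<Sum>b\<in>V. 45 * (\<Sum>a\<in>V. al E b a)^2 + (\<Sum>a\<in>V. be E b a)^2)"
    proof (rule sum.cong[OF refl])
      fix b
      show "(\<Sum>a\<in>V. \<Sum>c\<in>V. 45 * al E b a * al E b c + be E b a * be E b c)
          = 45 * (\<Sum>a\<in>V. al E b a)^2 + (\<Sum>a\<in>V. be E b a)^2"
        unfolding power2_eq_square sum_product unfolding sum_distrib_left sum.distrib mult.assoc ..
    qed
    also have "\<dots> \<ge> 0" by (intro sum_nonneg) auto
    finally show ?thesis by simp
  qed
  have split: "S3 V (WW E) = S3 V (\<lambda>a b c. 45 * al E b a * al E b c + be E b a * be E b c) + 200 * S3 V (pp E)"
    unfolding WW_def by (simp only: sum.distrib sum_distrib_left)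
  have six: "6 * S3 V (WW E) = S3 V (\<lambda>a b c. WW E a b c + WW E a c b + WW E b a c + WW E b c a + WW E c a b + WW E c b a)"
    using S3_perms[where V=V and f="WW E"] by (simp add: sum.distrib)
  also have "\<dots> \<le> S3 V (\<lambda>a b c. 96)"
    by (intro sum_mono local_bound) (use loop tf in auto)
  also have "\<dots> = 96 * real n ^ 3"
    by (simp add: n_def power3_eq_cube)
  finally have "S3 V (WW E) \<le> 16 * real n ^ 3" by simp
  with split sq cnt show ?thesis unfolding n_def by simp
qed

end
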